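(* Let $\bm{G}_t\in\mathbb{R}^{n_1\times n_2}$, $\epsilon_t>0$, $\bm{L}_t=\epsilon_t\bm{I}_{n_1}+\mathrm{diag}(\bm{G}_t\bm{G}_t^T)$, $\bm{R}_t=\epsilon_t\bm{I}_{n_2}+\mathrm{diag}(\bm{G}_t^T\bm{G}_t)$, and let $\bm{X}_t,\bm{X}\in\mathbb{R}^{n_1\times n_2}$ be rank-$r$ matrices, $\bm{X}_t=\bm{U}_t\bm{\Sigma}_t\bm{V}_t^T$ a compact SVD. Let $\widetilde{\mathcal{P}}_{\mathbb{T}_t}$ be the orthogonal projector, with respect to $\langle\cdot,\cdot\rangle_{\mathcal{W}_t}$, onto $\mathbb{T}_t=\{\bm{U}_t\bm{Q}^T+\bm{P}\bm{V}_t^T:\bm{P}\in\mathbb{R}^{n_1\times r},\bm{Q}\in\mathbb{R}^{n_2\times r}\}$. Then $$\big\|(\mathcal{I}-\widetilde{\mathcal{P}}_{\mathbb{T}_t})\bm{X}\big\|_{\mathcal{W}_t}\le\frac{\mu_t^{5/4}}{\nu_t^{7/4}\,\sigma_{\min}(\bm{X})}\,\|\bm{X}-\bm{X}_t\|_{\mathcal{W}_t}^2,$$ where $\nu_t=\epsilon_t^{1/2}$ and $\mu_t=(\epsilon_t+\|\bm{G}_t\|_\vee^2)^{1/2}$.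
   Context: $\mathrm{diag}(\bm{M})$ keeps only the diagonal of $\bm{M}$. $\langle\bm{Z},\bm{Y}\rangle_{\mathcal{W}_t}=\langle\bm{L}_t^{1/4}\bm{Z}\bm{R}_t^{1/4},\bm{Y}\rangle$ with $\langle\bm{A},\bm{B}\rangle=\mathrm{trace}(\bm{A}^T\bm{B})$, and $\|\cdot\|_{\mathcal{W}_t}$ is the induced norm. $\mathcal{I}$ is the identity. $\|\bm{Z}\|_\vee=\max\{\max_i\|\bm{Z}(i,:)\|_2,\max_j\|\bm{Z}(:,j)\|_2\}$. $\sigma_{\min}(\bm{X})$ is the smallest nonzero singular value of $\bm{X}$. *)

theory Defs
  imports "HOL-Analysis.Analysis"
begin

text \<open>Matrices are real^'c^'r (rows indexed by 'r, columns by 'c).\<close>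

definition mdiag :: "real^'n^'n \<Rightarrow> real^'n^'n" where
  "mdiag M = (\<chi> i j. if i = j then M $ i $ i else 0)"

definition diag_powr :: "real^'n^'n \<Rightarrow> real \<Rightarrow> real^'n^'n" where
  "diag_powr M p = (\<chi> i j. if i = j then (M $ i $ i) powr p else 0)"

definition winner :: "real^'m^'m \<Rightarrow> real^'n^'n \<Rightarrow> real^'n^'m \<Rightarrow> real^'n^'m \<Rightarrow> real" where
  "winner L R Z Y = trace (transpose (diag_powr L (1/4) ** Z ** diag_powr R (1/4)) ** Y)"

definition wnorm :: "real^'m^'m \<Rightarrow> real^'n^'n \<Rightarrow> real^'n^'m \<Rightarrow> real" where
  "wnorm L R Z = sqrt (winner L R Z Z)"

definition wproj :: "real^'m^'m \<Rightarrow> real^'n^'n \<Rightarrow> (real^'n^'m) set \<Rightarrow> real^'n^'m \<Rightarrow> real^'n^'m" where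
  "wproj L R T Z = (THE Y. Y \<in> T \<and> (\<forall>W\<in>T. winner L R (Z - Y) W = 0))"

definition vee_norm :: "real^'n^'m \<Rightarrow> real" where
  "vee_norm Z = max (Max (range (\<lambda>i. norm (row i Z)))) (Max (range (\<lambda>j. norm (column j Z))))"

text \<open>Smallest nonzero singular value: singular values are the s > 0 with s^2 an
  eigenvalue of X^T X.\<close>
definition sigma_min :: "real^'n^'m \<Rightarrow> real" where
  "sigma_min X = Min {s. s > 0 \<and> (\<exists>v. v \<noteq> 0 \<and> (transpose X ** X) *v v = (s^2) *\<^sub>R v)}"

definition tangent_space :: "real^'r^'m \<Rightarrow> real^'r^'n \<Rightarrow> (real^'n^'m) set" where
  "tangent_space U V = {U ** transpose Q + P ** transpose V | P Q. True}"

end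

theory Submission imports Defs begin

lemma winner_eq: "winner L R Z Y = (\<Sum>i\<in>UNIV. \<Sum>j\<in>UNIV. ((L$i$i) powr (1/4) * (R$j$j) powr (1/4)) * Z$i$j * Y$i$j)"
  unfolding winner_def trace_def diag_powr_def matrix_matrix_mult_def transpose_def
  apply (simp add: if_distrib if_distribR sum.delta cong: if_cong)
  apply (subst sum.swap)
  apply (simp add: algebra_simps)
  done

lemma mat_sub_ldistrib: "(A::real^'n^'m) ** (B - C) = A ** B - A ** C"
  by (simp add: vec_eq_iff matrix_matrix_mult_def sum_subtractf algebra_simps)
lemma mat_sub_rdistrib: "((B::real^'n^'m) - C) ** A = B ** A - C ** A"
  by (simp add: vec_eq_iff matrix_matrix_mult_def sum_subtractf algebra_simps)
lemma mat_add_rdistrib: "((B::real^'n^'m) + C) ** A = B ** A + C ** A"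
  by (simp add: vec_eq_iff matrix_matrix_mult_def sum.distrib algebra_simps)
lemma transpose_sub: "transpose ((A::real^'n^'m) - B) = transpose A - transpose B"
  by (simp add: vec_eq_iff transpose_def)
lemma transpose_add: "transpose ((A::real^'n^'m) + B) = transpose A + transpose B"
  by (simp add: vec_eq_iff transpose_def)
lemma transpose_scale: "transpose (c *\<^sub>R (A::real^'n^'m)) = c *\<^sub>R transpose A"
  by (simp add: vec_eq_iff transpose_def)
lemma mat_scale_r: "(A::real^'n^'m) ** (c *\<^sub>R B) = c *\<^sub>R (A ** B)"
  by (simp add: vec_eq_iff matrix_matrix_mult_def sum_distrib_left algebra_simps)
lemma mat_scale_l: "(c *\<^sub>R (A::real^'n^'m)) ** B = c *\<^sub>R (A ** B)"
  by (simp add: vec_eq_iff matrix_matrix_mult_def sum_distrib_left algebra_simps)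
lemma mat_zero_r: "(A::real^'n^'m) ** (0::real^'k^'n) = 0"
  by (simp add: vec_eq_iff matrix_matrix_mult_def)
lemma mat_zero_l: "(0::real^'n^'m) ** (A::real^'k^'n) = 0"
  by (simp add: vec_eq_iff matrix_matrix_mult_def)
lemma transpose_zero: "transpose (0::real^'n^'m) = 0"
  by (simp add: vec_eq_iff transpose_def)

lemma inner_mat: "inner (A::real^'n^'m) B = (\<Sum>i\<in>UNIV. \<Sum>j\<in>UNIV. A$i$j * B$i$j)"
  by (simp add: inner_vec_def inner_real_def)

lemma inner_transpose: "inner (transpose (A::real^'n^'m)) (transpose B) = inner A B"
  unfolding inner_mat transpose_def by (simp, subst sum.swap, simp)

lemma row_mult: "((A::real^'n^'m) ** B) $ i = (A $ i) v* B"
  by (simp add: vec_eq_iff matrix_matrix_mult_def vector_matrix_mult_def mult.commute)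

lemma inner_XX: "inner ((X::real^'n^'m) *v a) (X *v b) = inner a ((transpose X ** X) *v b)"
proof -
  have "X *v a = a v* transpose X" by simp
  then show ?thesis using dot_lmul_matrix[of a "transpose X" "X *v b"]
    by (simp only: matrix_vector_mul_assoc)
qed

definition wi :: "('m::finite \<Rightarrow> 'n::finite \<Rightarrow> real) \<Rightarrow> real^'n^'m \<Rightarrow> real^'n^'m \<Rightarrow> real" where
  "wi w Z Y = (\<Sum>i\<in>UNIV. \<Sum>j\<in>UNIV. w i j * Z$i$j * Y$i$j)"
definition ph :: "('m::finite \<Rightarrow> 'n::finite \<Rightarrow> real) \<Rightarrow> real^'n^'m \<Rightarrow> real^'n^'m" where
  "ph w Z = (\<chi> i j. sqrt (w i j) * Z$i$j)"

lemma inner_ph: assumes "\<forall>i j. w i j \<ge> 0" shows "inner (ph w A) (ph w B) = wi w A B"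
  unfolding inner_mat ph_def wi_def
  by (rule sum.cong[OF refl], rule sum.cong[OF refl]) (simp add: assms algebra_simps)

lemma linear_ph: "linear (ph w)"
  by (rule linearI) (simp_all add: ph_def vec_eq_iff algebra_simps)

lemma ph_diff: "ph w (A - B) = ph w A - ph w B"
  by (simp add: ph_def vec_eq_iff algebra_simps)

lemma ph_inj: assumes "\<forall>i j. w i j > 0" "ph w A = ph w B" shows "A = B"
  using assms unfolding ph_def vec_eq_iff by simp (metis order_less_irrefl)

lemma wi_upper: assumes "\<forall>i j. w i j \<le> c" shows "wi w Z Z \<le> c * inner Z Z"
  unfolding wi_def inner_mat sum_distrib_left
  by (intro sum_mono) (simp add: assms mult.assoc mult_right_mono)

lemma wi_lower: assumes "\<forall>i j. w i j \<ge> c" shows "c * inner Z Z \<le> wi w Z Z"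
  unfolding wi_def inner_mat sum_distrib_left
  by (intro sum_mono) (simp add: assms mult.assoc mult_right_mono)


lemma wproj_exists: assumes T: "subspace T" and wpos: "\<forall>i j. w i j > 0"
  shows "\<exists>!Y. Y \<in> T \<and> (\<forall>W\<in>T. wi w (X - Y) W = 0)"
proof -
  have w0: "\<forall>i j. w i j \<ge> 0" using wpos by (simp add: less_imp_le)
  have sub: "subspace (ph w ` T)" using linear_ph T by (rule linear_subspace_image)
  obtain y z where y: "y \<in> span (ph w ` T)" and z: "\<And>v. v \<in> span (ph w ` T) \<Longrightarrow> orthogonal z v"
    and e: "ph w X = y + z" using orthogonal_subspace_decomp_exists by blast
  from y sub have "y \<in> ph w ` T" by (metis span_eq_iff)
  then obtain Y where Y: "Y \<in> T" "y = ph w Y" by auto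
  have zX: "ph w (X - Y) = z" using e Y by (simp add: ph_diff)
  show ?thesis
  proof (rule ex1I[of _ Y])
    show "Y \<in> T \<and> (\<forall>W\<in>T. wi w (X - Y) W = 0)"
    proof (intro conjI ballI)
      fix W assume "W \<in> T"
      then have "ph w W \<in> span (ph w ` T)" by (simp add: span_base)
      then have "inner z (ph w W) = 0" using z orthogonal_def by blast
      then show "wi w (X - Y) W = 0" using inner_ph[OF w0] zX by metis
    qed (rule Y(1))
  next
    fix Y' assume Y': "Y' \<in> T \<and> (\<forall>W\<in>T. wi w (X - Y') W = 0)"
    have d: "Y' - Y \<in> T" using Y' Y(1) T by (simp add: subspace_diff)
    have "inner (ph w (X - Y)) (ph w (Y' - Y)) = 0"
      using inner_ph[OF w0] zX z d by (simp add: span_base orthogonal_def)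
    moreover have "inner (ph w (X - Y')) (ph w (Y' - Y)) = 0"
      using inner_ph[OF w0] Y' d by simp
    ultimately have "inner (ph w (Y' - Y)) (ph w (Y' - Y)) = 0"
      by (simp add: ph_diff inner_diff_left inner_diff_right algebra_simps)
    then have "ph w (Y' - Y) = ph w 0" by (simp add: ph_def vec_eq_iff)
    then have "Y' - Y = 0" using ph_inj[OF wpos] by blast
    then show "Y' = Y" by simp
  qed
qed

lemma wproj_opt: assumes w0: "\<forall>i j. w i j \<ge> 0" and T: "subspace T" and Y: "Y \<in> T"
  and orth: "\<forall>W\<in>T. wi w (X - Y) W = 0" and Z: "Z \<in> T"
  shows "wi w (X - Y) (X - Y) \<le> wi w (X - Z) (X - Z)"
proof -
  define a where "a = ph w (X - Y)"
  define b where "b = ph w (Y - Z)"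
  have "Y - Z \<in> T" using Y Z T by (simp add: subspace_diff)
  then have ab: "inner a b = 0" using orth inner_ph[OF w0] a_def b_def by simp
  have "ph w (X - Z) = a + b" by (simp add: a_def b_def ph_diff)
  then have "wi w (X - Z) (X - Z) = inner a a + inner b b"
    using inner_ph[OF w0, of "X - Z" "X - Z"] ab by (simp add: inner_add_left inner_add_right inner_commute)
  moreover have "wi w (X - Y) (X - Y) = inner a a" using inner_ph[OF w0] a_def by simp
  ultimately show ?thesis by simp
qed


lemma mv_bound: "inner ((A::real^'n^'m) *v v) (A *v v) \<le> inner A A * inner v v"
proof -
  have "inner (A *v v) (A *v v) = (\<Sum>i\<in>UNIV. (inner (A$i) v)^2)"
    by (simp add: inner_vec_def matrix_vector_mul_component power2_eq_square)
  also have "\<dots> \<le> (\<Sum>i\<in>UNIV. inner (A$i) (A$i) * inner v v)"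
    by (intro sum_mono Cauchy_Schwarz_ineq)
  also have "\<dots> = inner A A * inner v v"
    by (simp add: inner_vec_def[of A A] sum_distrib_right)
  finally show ?thesis .
qed

lemma proj_contract:
  fixes M :: "real^'r^'n"
  assumes "transpose M ** M = mat 1"
  shows "inner ((mat 1 - M ** transpose M) *v a) ((mat 1 - M ** transpose M) *v a) \<le> inner a a"
proof -
  define u where "u = transpose M *v a"
  define c where "c = M *v u"
  define b where "b = a - c"
  have Pa: "(mat 1 - M ** transpose M) *v a = b"
    by (simp add: b_def c_def u_def matrix_vector_mult_diff_rdistrib matrix_vector_mul_assoc[symmetric])
  have i1: "inner a c = inner u u"
    unfolding c_def u_def using dot_lmul_matrix[of a M "transpose M *v a"] by simp
  have i2: "inner c c = inner u u"
    unfolding c_def using inner_XX[of M u u] assms by simp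
  have "inner b c = 0" using i1 i2 by (simp add: b_def inner_diff_left)
  then have "inner a a = inner b b + inner c c"
    by (simp add: b_def inner_diff_left inner_diff_right inner_commute)
  then show ?thesis using Pa by simp
qed

definition sset :: "real^'n^'m \<Rightarrow> real set" where
  "sset X = {s. s > 0 \<and> (\<exists>v. v \<noteq> 0 \<and> (transpose X ** X) *v v = (s^2) *\<^sub>R v)}"

lemma sigma_min_sset: "sigma_min X = Min (sset X)"
  by (simp add: sigma_min_def sset_def)

lemma symA: "inner ((transpose X ** X) *v a) b = inner a ((transpose (X::real^'n^'m) ** X) *v b)"
  using inner_XX[of X a b] inner_XX[of X b a] by (simp add: inner_commute)

lemma sset_finite: "finite (sset (X::real^'n^'m))"
proof -
  define A where "A = transpose X ** X"
  define f where "f s = (SOME v. v \<noteq> 0 \<and> A *v v = (s^2) *\<^sub>R v)" for s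
  have f: "f s \<noteq> 0 \<and> A *v f s = (s^2) *\<^sub>R f s" if "s \<in> sset X" for s
  proof -
    from that obtain v where "v \<noteq> 0 \<and> A *v v = (s^2) *\<^sub>R v" unfolding sset_def A_def by auto
    then show ?thesis unfolding f_def by (rule someI)
  qed
  have sq: "s1 = s2" if "s1 \<in> sset X" "s2 \<in> sset X" "s1^2 = s2^2" for s1 s2
    using that by (simp add: sset_def power2_eq_iff_nonneg less_imp_le)
  have inj: "inj_on f (sset X)"
  proof (rule inj_onI)
    fix s1 s2 assume a: "s1 \<in> sset X" "s2 \<in> sset X" "f s1 = f s2"
    then have "(s1^2) *\<^sub>R f s1 = (s2^2) *\<^sub>R f s1" using f by metis
    then have "s1^2 = s2^2" using f[OF a(1)] by simp
    then show "s1 = s2" using sq a by blast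
  qed
  have po: "pairwise orthogonal (f ` sset X)"
  proof (rule pairwiseI)
    fix x y assume "x \<in> f ` sset X" "y \<in> f ` sset X" "x \<noteq> y"
    then obtain s1 s2 where s: "s1 \<in> sset X" "s2 \<in> sset X" "x = f s1" "y = f s2" "s1 \<noteq> s2" by blast
    have ne: "s1^2 \<noteq> s2^2" using sq s by blast
    have "s1^2 * inner x y = inner (A *v x) y" using f[OF s(1)] s(3) by simp
    also have "\<dots> = inner x (A *v y)" unfolding A_def by (rule symA)
    also have "\<dots> = s2^2 * inner x y" using f[OF s(2)] s(4) by simp
    finally have "inner x y = 0" using ne by simp
    then show "orthogonal x y" by (simp add: orthogonal_def)
  qed
  have "0 \<notin> f ` sset X" using f by force
  then have "independent (f ` sset X)" using po pairwise_orthogonal_independent by blast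
  then have "finite (f ` sset X)" by (rule finiteI_independent)
  then show ?thesis using inj finite_imageD by blast
qed

lemma quad_zero: assumes "\<forall>t::real. 0 \<le> 2*t*c + t^2*g" "g \<ge> 0" shows "c = 0"
proof (rule ccontr)
  assume c: "c \<noteq> 0"
  define t where "t = - c / (g + 1)"
  have gp: "g + 1 > 0" using assms by simp
  have "0 \<le> 2*t*c + t^2*g" using assms by blast
  also have "\<dots> \<le> 2*t*c + t^2*(g+1)" by (simp add: algebra_simps)
  also have "\<dots> = -(c^2) / (g+1)" using gp unfolding t_def by (simp add: power_divide power2_eq_square)
  also have "\<dots> < 0" using c gp by simp
  finally show False by simp
qed


lemma XA: "(transpose X ** X) *v v = transpose (X::real^'n^'m) *v (X *v v)"
  by (simp only: matrix_vector_mul_assoc)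

lemma scale_f: "inner (X *v (c *\<^sub>R v)) (X *v (c *\<^sub>R v)) = c^2 * inner ((X::real^'n^'m) *v v) (X *v v)"
  by (simp add: matrix_vector_mult_scaleR power2_eq_square)

lemma rayleigh:
  fixes X :: "real^'n^'m"
  assumes X0: "X \<noteq> 0"
  shows "\<exists>l>0. sqrt l \<in> sset X \<and> (\<forall>v\<in>range ((*v) (transpose X ** X)). l * inner v v \<le> inner (X *v v) (X *v v))"
proof -
  define A where "A = transpose X ** X"
  define S where "S = range ((*v) A)"
  define f where "f v = inner (X *v v) (X *v v)" for v
  have fA: "f v = inner v (A *v v)" for v unfolding f_def A_def by (rule inner_XX)
  have subS: "subspace S" unfolding S_def
    using matrix_vector_mul_linear subspace_UNIV by (rule linear_subspace_image)
  obtain v0 where v0: "X *v v0 \<noteq> 0"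
  proof -
    have "\<exists>v. X *v v \<noteq> 0"
    proof (rule ccontr)
      assume "\<not> (\<exists>v. X *v v \<noteq> 0)"
      then have "\<forall>v. X *v v = 0 *v v" by simp
      then have "X = 0" using matrix_eq by blast
      then show False using X0 by simp
    qed
    then show ?thesis using that by blast
  qed
  have Av0: "A *v v0 \<noteq> 0"
  proof
    assume "A *v v0 = 0"
    then have "f v0 = 0" using fA by simp
    then show False using v0 unfolding f_def by simp
  qed
  define K where "K = S \<inter> sphere 0 1"
  have "closed S" using subS by (rule closed_subspace)
  then have cK: "compact K" unfolding K_def by (simp add: closed_Int_compact)
  have "(1 / norm (A *v v0)) *\<^sub>R (A *v v0) \<in> S" unfolding S_def by (metis matrix_vector_mult_scaleR rangeI)
  moreover have "norm ((1 / norm (A *v v0)) *\<^sub>R (A *v v0)) = 1" using Av0 by simp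
  ultimately have u0: "(1 / norm (A *v v0)) *\<^sub>R (A *v v0) \<in> K" unfolding K_def by simp
  then have neK: "K \<noteq> {}" by blast
  have bl: "bounded_linear ((*v) X)" by (simp add: linear_conv_bounded_linear)
  have cf: "continuous_on K f" unfolding f_def
    by (intro continuous_intros bounded_linear.continuous_on[OF bl])
  obtain a0 where a0: "a0 \<in> K" and amin: "\<And>y. y \<in> K \<Longrightarrow> f a0 \<le> f y"
    using continuous_attains_inf[OF cK neK cf] by blast
  define l where "l = f a0"
  have a0S: "a0 \<in> S" and na0: "norm a0 = 1" using a0 unfolding K_def by auto
  have ia0: "inner a0 a0 = 1" using na0 by (simp add: power2_norm_eq_inner[symmetric])
  have R: "l * inner v v \<le> f v" if "v \<in> S" for v
  proof (cases "v = 0")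
    case True then show ?thesis by (simp add: f_def)
  next
    case False
    define u where "u = (1 / norm v) *\<^sub>R v"
    have "u \<in> K" unfolding K_def u_def using False that subS by (simp add: subspace_scale)
    then have "l \<le> f u" using amin l_def by blast
    also have "f u = f v / (norm v)^2" unfolding f_def u_def scale_f by (simp add: power_divide)
    finally have "l * (norm v)^2 \<le> f v" using False by (simp add: pos_le_divide_eq)
    then show ?thesis by (simp add: power2_norm_eq_inner)
  qed
  have l0: "l \<ge> 0" unfolding l_def f_def by simp
  have orthB: "inner (A *v a0 - l *\<^sub>R a0) h = 0" if hS: "h \<in> S" for h
  proof -
    define c where "c = inner (A *v a0 - l *\<^sub>R a0) h"
    define g where "g = f h - l * inner h h"
    have g0: "g \<ge> 0" using R[OF hS] g_def by simp
    have "0 \<le> 2*t*c + t^2*g" for t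
    proof -
      have "a0 + t *\<^sub>R h \<in> S" using a0S hS subS by (simp add: subspace_add subspace_scale)
      then have "0 \<le> f (a0 + t *\<^sub>R h) - l * inner (a0 + t *\<^sub>R h) (a0 + t *\<^sub>R h)" using R by simp
      also have "f (a0 + t *\<^sub>R h) = f a0 + 2*t*inner (A *v a0) h + t^2 * f h"
      proof -
        have "f (a0 + t *\<^sub>R h) = inner (X *v a0 + t *\<^sub>R (X *v h)) (X *v a0 + t *\<^sub>R (X *v h))"
          unfolding f_def by (simp add: matrix_vector_right_distrib matrix_vector_mult_scaleR)
        also have "\<dots> = f a0 + 2*t*inner (X *v a0) (X *v h) + t^2 * f h"
          unfolding f_def by (simp add: inner_add_left inner_add_right inner_commute power2_eq_square algebra_simps)
        also have "inner (X *v a0) (X *v h) = inner (A *v a0) h"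
          unfolding A_def by (simp only: inner_XX symA)
        finally show ?thesis .
      qed
      also have "inner (a0 + t *\<^sub>R h) (a0 + t *\<^sub>R h) = 1 + 2*t*inner a0 h + t^2 * inner h h"
        using ia0 by (simp add: inner_add_left inner_add_right inner_commute power2_eq_square algebra_simps)
      finally show ?thesis
        unfolding c_def g_def l_def by (simp add: inner_diff_left algebra_simps)
    qed
    then have "c = 0" using quad_zero g0 by blast
    then show ?thesis by (simp add: c_def)
  qed
  have "A *v a0 - l *\<^sub>R a0 \<in> S"
    using a0S subS by (simp add: S_def subspace_diff subspace_scale)
  then have "inner (A *v a0 - l *\<^sub>R a0) (A *v a0 - l *\<^sub>R a0) = 0" by (rule orthB)
  then have eig: "A *v a0 = l *\<^sub>R a0" by simp
  have lpos: "l > 0"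
  proof (rule ccontr)
    assume "\<not> l > 0"
    then have "l = 0" using l0 by simp
    then have "A *v a0 = 0" using eig by simp
    obtain x where x: "a0 = A *v x" using a0S S_def by blast
    have "inner a0 a0 = inner x (A *v a0)" using x unfolding A_def by (simp add: symA)
    then have "inner a0 a0 = 0" using \<open>A *v a0 = 0\<close> by simp
    then show False using ia0 by simp
  qed
  have "sqrt l \<in> sset X" unfolding sset_def using lpos eig na0 A_def
    by (auto intro!: exI[of _ a0])
  then show ?thesis using lpos R unfolding S_def f_def A_def by blast
qed


lemma sigma_props:
  fixes X :: "real^'n^'m"
  assumes X0: "X \<noteq> 0"
  shows "sigma_min X > 0 \<and> (\<forall>v\<in>range ((*v) (transpose X ** X)). (sigma_min X)^2 * inner v v \<le> inner (X *v v) (X *v v))"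
proof -
  obtain l where l: "l > 0" "sqrt l \<in> sset X"
    and R: "\<forall>v\<in>range ((*v) (transpose X ** X)). l * inner v v \<le> inner (X *v v) (X *v v)"
    using rayleigh[OF X0] by blast
  have fin: "finite (sset X)" by (rule sset_finite)
  have ne: "sset X \<noteq> {}" using l by blast
  have mi: "Min (sset X) \<in> sset X" using Min_in[OF fin ne] .
  then have sp: "sigma_min X > 0" by (simp add: sigma_min_sset sset_def)
  have "sigma_min X \<le> sqrt l" using Min_le[OF fin l(2)] by (simp add: sigma_min_sset)
  then have "(sigma_min X)^2 \<le> (sqrt l)^2" using sp by (intro power_mono) auto
  then have s2: "(sigma_min X)^2 \<le> l" using l by simp
  show ?thesis
  proof (intro conjI ballI sp)
    fix v assume "v \<in> range ((*v) (transpose X ** X))"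
    then have "l * inner v v \<le> inner (X *v v) (X *v v)" using R by blast
    moreover have "(sigma_min X)^2 * inner v v \<le> l * inner v v" using s2 by (intro mult_right_mono) auto
    ultimately show "(sigma_min X)^2 * inner v v \<le> inner (X *v v) (X *v v)" by linarith
  qed
qed

lemma rowspace_proj:
  fixes X :: "real^'n^'m"
  shows "\<exists>v\<in>range ((*v) (transpose X ** X)). X *v v = X *v q"
proof -
  define S where "S = range ((*v) (transpose X ** X))"
  have subS: "subspace S" unfolding S_def
    using matrix_vector_mul_linear subspace_UNIV by (rule linear_subspace_image)
  obtain y z where y: "y \<in> span S" and z: "\<And>w. w \<in> span S \<Longrightarrow> orthogonal z w"
    and e: "q = y + z" using orthogonal_subspace_decomp_exists by blast
  have yS: "y \<in> S" using y subS by (metis span_eq_iff)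
  have "(transpose X ** X) *v z \<in> span S" unfolding S_def by (simp add: span_base)
  then have "inner z ((transpose X ** X) *v z) = 0" using z orthogonal_def by blast
  then have "inner (X *v z) (X *v z) = 0" by (simp add: inner_XX)
  then have "X *v z = 0" by simp
  then have "X *v q = X *v y" using e by (simp add: matrix_vector_right_distrib)
  then show ?thesis using yS S_def by metis
qed

lemma column_mult: "column j ((A::real^'n^'m) ** B) = A *v column j B"
  by (simp add: vec_eq_iff column_def matrix_matrix_mult_def matrix_vector_mult_def)

lemma inner_columns: "inner (A::real^'n^'m) A = (\<Sum>j\<in>UNIV. inner (column j A) (column j A))"
  unfolding inner_mat by (simp add: column_def inner_vec_def, subst sum.swap, simp)

lemma key:
  fixes X :: "real^'n^'m" and Y :: "real^'m^'p" and Q :: "real^'k^'n"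
  assumes X0: "X \<noteq> 0"
  shows "(sigma_min X)^2 * inner (Y ** (X ** Q)) (Y ** (X ** Q)) \<le> inner (Y ** X) (Y ** X) * inner (X ** Q) (X ** Q)"
proof -
  have sp: "sigma_min X > 0" and R: "\<forall>v\<in>range ((*v) (transpose X ** X)). (sigma_min X)^2 * inner v v \<le> inner (X *v v) (X *v v)"
    using sigma_props[OF X0] by auto
  have col: "(sigma_min X)^2 * inner (column j (Y ** (X ** Q))) (column j (Y ** (X ** Q)))
      \<le> inner (Y ** X) (Y ** X) * inner (column j (X ** Q)) (column j (X ** Q))" for j
  proof -
    define q where "q = column j Q"
    obtain v where v: "v \<in> range ((*v) (transpose X ** X))" "X *v v = X *v q"
      using rowspace_proj by blast
    have c1: "column j (Y ** (X ** Q)) = (Y ** X) *v v"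
      by (simp add: column_mult q_def v(2) matrix_vector_mul_assoc[symmetric])
    have c2: "column j (X ** Q) = X *v v" by (simp add: column_mult q_def v(2))
    have "(sigma_min X)^2 * inner ((Y ** X) *v v) ((Y ** X) *v v) \<le> (sigma_min X)^2 * (inner (Y ** X) (Y ** X) * inner v v)"
      by (intro mult_left_mono mv_bound) simp
    also have "\<dots> = inner (Y ** X) (Y ** X) * ((sigma_min X)^2 * inner v v)" by simp
    also have "\<dots> \<le> inner (Y ** X) (Y ** X) * inner (X *v v) (X *v v)"
      using R v(1) by (intro mult_left_mono) auto
    finally show ?thesis using c1 c2 by simp
  qed
  have "(sigma_min X)^2 * inner (Y ** (X ** Q)) (Y ** (X ** Q)) = (\<Sum>j\<in>UNIV. (sigma_min X)^2 * inner (column j (Y ** (X ** Q))) (column j (Y ** (X ** Q))))"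
    by (simp add: inner_columns[of "Y ** (X ** Q)"] sum_distrib_left)
  also have "\<dots> \<le> (\<Sum>j\<in>UNIV. inner (Y ** X) (Y ** X) * inner (column j (X ** Q)) (column j (X ** Q)))"
    by (intro sum_mono col)
  also have "\<dots> = inner (Y ** X) (Y ** X) * inner (X ** Q) (X ** Q)"
    by (simp add: inner_columns[of "X ** Q"] sum_distrib_left)
  finally show ?thesis .
qed


lemma left_contract:
  fixes U :: "real^'r^'n" and A :: "real^'k^'n"
  assumes "transpose U ** U = mat 1"
  shows "inner ((mat 1 - U ** transpose U) ** A) ((mat 1 - U ** transpose U) ** A) \<le> inner A A"
  unfolding inner_columns[of "(mat 1 - U ** transpose U) ** A"] inner_columns[of A] column_mult
  by (intro sum_mono proj_contract assms)

lemma sym_proj: "transpose (mat 1 - V ** transpose V) = (mat 1 - V ** transpose (V::real^'r^'n))"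
  by (simp add: transpose_sub matrix_transpose_mul)

lemma right_contract:
  fixes V :: "real^'r^'n" and A :: "real^'n^'k"
  assumes "transpose V ** V = mat 1"
  shows "inner (A ** (mat 1 - V ** transpose V)) (A ** (mat 1 - V ** transpose V)) \<le> inner A A"
proof -
  have "inner (A ** (mat 1 - V ** transpose V)) (A ** (mat 1 - V ** transpose V))
     = inner ((mat 1 - V ** transpose V) ** transpose A) ((mat 1 - V ** transpose V) ** transpose A)"
    using inner_transpose[of "A ** (mat 1 - V ** transpose V)" "A ** (mat 1 - V ** transpose V)"]
    by (simp add: matrix_transpose_mul sym_proj)
  also have "\<dots> \<le> inner (transpose A) (transpose A)" by (rule left_contract[OF assms])
  also have "\<dots> = inner A A" by (rule inner_transpose)
  finally show ?thesis .
qed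

lemma final_arith:
  fixes nu mu s a e y :: real
  assumes "0 < nu" "nu \<le> mu" "0 < s" "0 \<le> a" "0 \<le> e" "s^2 * e \<le> (a/nu)^2" "y \<le> mu * e"
  shows "sqrt y \<le> mu powr (5/4) / (nu powr (7/4) * s) * a"
proof -
  have mu0: "0 < mu" using assms by linarith
  have "(s * sqrt e)^2 \<le> (a/nu)^2" using assms by (simp add: power_mult_distrib)
  moreover have "0 \<le> a / nu" using assms by simp
  ultimately have se: "s * sqrt e \<le> a / nu" by (rule power2_le_imp_le)
  have "sqrt y \<le> sqrt (mu * e)" using assms by simp
  also have "\<dots> = sqrt mu * sqrt e" by (simp add: real_sqrt_mult)
  also have "\<dots> \<le> sqrt mu * (a / (nu * s))"
  proof -
    have "sqrt e = (s * sqrt e) / s" using assms by simp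
    also have "\<dots> \<le> (a / nu) / s" using assms se by (intro divide_right_mono) auto
    also have "\<dots> = a / (nu * s)" by simp
    finally show ?thesis using mu0 by (intro mult_left_mono) auto
  qed
  also have "\<dots> = (mu powr (1/2) / nu) * (a / s)" using mu0 by (simp add: powr_half_sqrt)
  also have "\<dots> \<le> (mu powr (5/4) / nu powr (7/4)) * (a / s)"
  proof (intro mult_right_mono)
    have "nu powr (3/4) \<le> mu powr (3/4)" using assms by (intro powr_mono2) auto
    then have "mu powr (1/2) * nu powr (3/4) \<le> mu powr (1/2) * mu powr (3/4)" by (intro mult_left_mono) auto
    also have "\<dots> = mu powr (5/4)" by (simp add: powr_add[symmetric])
    finally have h: "mu powr (1/2) * nu powr (3/4) \<le> mu powr (5/4)" .
    have "nu powr (7/4) = nu powr (1 + 3/4)" by simp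
    also have "\<dots> = nu powr 1 * nu powr (3/4)" by (rule powr_add)
    also have "\<dots> = nu * nu powr (3/4)" using assms by simp
    finally have n74: "nu powr (7/4) = nu * nu powr (3/4)" .
    have np: "nu powr (3/4) > 0" using assms by simp
    have "mu powr (1/2) / nu = (mu powr (1/2) * nu powr (3/4)) / nu powr (7/4)"
      using np by (simp add: n74)
    also have "\<dots> \<le> mu powr (5/4) / nu powr (7/4)" using h assms by (intro divide_right_mono) auto
    finally show "mu powr (1/2) / nu \<le> mu powr (5/4) / nu powr (7/4)" .
  qed (use assms in auto)
  also have "\<dots> = mu powr (5/4) / (nu powr (7/4) * s) * a" by simp
  finally show ?thesis .
qed


lemma Ldiag: "(eps *\<^sub>R mat 1 + mdiag (G ** transpose G)) $ i $ i = eps + inner (row i (G::real^'n^'m)) (row i G)"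
  by (simp add: mdiag_def mat_def matrix_matrix_mult_def transpose_def row_def inner_vec_def)

lemma Rdiag: "(eps *\<^sub>R mat 1 + mdiag (transpose G ** G)) $ j $ j = eps + inner (column j (G::real^'n^'m)) (column j G)"
  by (simp add: mdiag_def mat_def matrix_matrix_mult_def transpose_def column_def inner_vec_def)

lemma vee_row: "inner (row i (G::real^'n^'m)) (row i G) \<le> (vee_norm G)^2"
proof -
  have "norm (row i G) \<le> Max (range (\<lambda>i. norm (row i G)))" by (rule Max_ge) auto
  then have "norm (row i G) \<le> vee_norm G" unfolding vee_norm_def by linarith
  then have "(norm (row i G))^2 \<le> (vee_norm G)^2" by (intro power_mono) auto
  then show ?thesis by (simp add: power2_norm_eq_inner)
qed

lemma vee_col: "inner (column j (G::real^'n^'m)) (column j G) \<le> (vee_norm G)^2"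
proof -
  have "norm (column j G) \<le> Max (range (\<lambda>j. norm (column j G)))" by (rule Max_ge) auto
  then have "norm (column j G) \<le> vee_norm G" unfolding vee_norm_def by linarith
  then have "(norm (column j G))^2 \<le> (vee_norm G)^2" by (intro power_mono) auto
  then show ?thesis by (simp add: power2_norm_eq_inner)
qed

lemma subspace_T: "subspace (tangent_space U V)"
  unfolding subspace_def tangent_space_def
proof (intro conjI allI impI ballI)
  show "0 \<in> {U ** transpose Q + P ** transpose V |P Q. True}"
    by (auto simp: transpose_zero mat_zero_r mat_zero_l intro!: exI[of _ 0])
next
  fix c x assume "x \<in> {U ** transpose Q + P ** transpose V |P Q. True}"
  then obtain P Q where "x = U ** transpose Q + P ** transpose V" by blast
  then have "c *\<^sub>R x = U ** transpose (c *\<^sub>R Q) + (c *\<^sub>R P) ** transpose V"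
    by (simp add: transpose_scale mat_scale_r mat_scale_l scaleR_add_right)
  then show "c *\<^sub>R x \<in> {U ** transpose Q + P ** transpose V |P Q. True}" by blast
next
  fix x y assume "x \<in> {U ** transpose Q + P ** transpose V |P Q. True}" "y \<in> {U ** transpose Q + P ** transpose V |P Q. True}"
  then obtain P Q P' Q' where "x = U ** transpose Q + P ** transpose V" "y = U ** transpose Q' + P' ** transpose V" by blast
  then have "x + y = U ** transpose (Q + Q') + (P + P') ** transpose V"
    by (simp add: transpose_add matrix_add_ldistrib mat_add_rdistrib algebra_simps)
  then show "x + y \<in> {U ** transpose Q + P ** transpose V |P Q. True}" by blast
qed

theorem lemma3p7:
  fixes G X Xt :: "real^'n2^'n1"
    and U :: "real^'r^'n1" and S :: "real^'r^'r" and V :: "real^'r^'n2"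
    and eps :: real
  assumes eps_pos: "eps > 0"
    and rank_X: "rank X = CARD('r)"
    and rank_Xt: "rank Xt = CARD('r)"
    and svd: "Xt = U ** S ** transpose V"
    and U_orth: "transpose U ** U = mat 1"
    and V_orth: "transpose V ** V = mat 1"
    and S_diag: "\<forall>i j. i \<noteq> j \<longrightarrow> S $ i $ j = 0"
    and S_pos: "\<forall>i. S $ i $ i > 0"
  shows "let L = eps *\<^sub>R mat 1 + mdiag (G ** transpose G);
             R = eps *\<^sub>R mat 1 + mdiag (transpose G ** G);
             \<nu> = eps powr (1/2);
             \<mu> = (eps + (vee_norm G)^2) powr (1/2)
         in wnorm L R (X - wproj L R (tangent_space U V) X)
            \<le> \<mu> powr (5/4) / (\<nu> powr (7/4) * sigma_min X) * (wnorm L R (X - Xt))^2"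
proof -
  define L where "L = eps *\<^sub>R mat 1 + mdiag (G ** transpose G)"
  define R where "R = eps *\<^sub>R mat 1 + mdiag (transpose G ** G)"
  define nu where "nu = eps powr (1/2)"
  define mu where "mu = (eps + (vee_norm G)^2) powr (1/2)"
  define M where "M = eps + (vee_norm G)^2"
  define T where "T = tangent_space U V"
  define w where "w i j = L$i$i powr (1/4) * R$j$j powr (1/4)" for i j
  have Li: "eps \<le> L$i$i \<and> L$i$i \<le> M" for i
    unfolding L_def M_def Ldiag using vee_row[of i G] by simp
  have Rj: "eps \<le> R$j$j \<and> R$j$j \<le> M" for j
    unfolding R_def M_def Rdiag using vee_col[of j G] by simp
  have e4: "eps powr (1/4) * eps powr (1/4) = nu" unfolding nu_def by (simp add: powr_add[symmetric])
  have M4: "M powr (1/4) * M powr (1/4) = mu" unfolding mu_def M_def by (simp add: powr_add[symmetric])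
  have wlo: "\<forall>i j. nu \<le> w i j"
  proof (intro allI)
    fix i j
    have "eps powr (1/4) * eps powr (1/4) \<le> L$i$i powr (1/4) * R$j$j powr (1/4)"
      using Li[of i] Rj[of j] eps_pos by (intro mult_mono powr_mono2) auto
    then show "nu \<le> w i j" using e4 w_def by simp
  qed
  have whi: "\<forall>i j. w i j \<le> mu"
  proof (intro allI)
    fix i j
    have "L$i$i powr (1/4) * R$j$j powr (1/4) \<le> M powr (1/4) * M powr (1/4)"
      using Li[of i] Rj[of j] eps_pos by (intro mult_mono powr_mono2) auto
    then show "w i j \<le> mu" using M4 w_def by simp
  qed
  have nu0: "nu > 0" unfolding nu_def using eps_pos by simp
  have numu: "nu \<le> mu" using wlo whi by (meson order_trans)
  have wpos: "\<forall>i j. w i j > 0" using wlo nu0 by (meson less_le_trans)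
  have w0: "\<forall>i j. w i j \<ge> 0" using wpos by (simp add: less_imp_le)
  have win: "winner L R = wi w" by (intro ext) (simp add: winner_eq wi_def w_def)
  have subT: "subspace T" unfolding T_def by (rule subspace_T)
  define Yp where "Yp = wproj L R T X"
  have Yp: "Yp \<in> T \<and> (\<forall>W\<in>T. wi w (X - Yp) W = 0)"
    unfolding Yp_def wproj_def win using theI'[OF wproj_exists[OF subT wpos, of X]] .
  define Pp where "Pp = mat 1 - U ** transpose U"
  define Qp where "Qp = mat 1 - V ** transpose V"
  define E where "E = Pp ** (X ** Qp)"
  define D where "D = X - Xt"
  have ZT: "X - E \<in> T"
  proof -
    have "X - E = U ** transpose (transpose X ** U) + ((Pp ** X) ** V) ** transpose V"
      unfolding E_def Pp_def Qp_def
      by (simp add: mat_sub_ldistrib mat_sub_rdistrib matrix_mul_assoc matrix_transpose_mul)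
    then show ?thesis unfolding T_def tangent_space_def by blast
  qed
  have opt: "wi w (X - Yp) (X - Yp) \<le> wi w E E"
    using wproj_opt[OF w0 subT conjunct1[OF Yp] conjunct2[OF Yp] ZT] by simp
  also have "\<dots> \<le> mu * inner E E" using wi_upper whi by blast
  finally have opt2: "wi w (X - Yp) (X - Yp) \<le> mu * inner E E" .
  have PU: "Pp ** U = 0" unfolding Pp_def
    by (simp add: mat_sub_rdistrib matrix_mul_assoc[symmetric] U_orth)
  have PXt: "Pp ** Xt = 0" unfolding svd
    by (simp add: matrix_mul_assoc PU mat_zero_l)
  have XtV: "Xt ** V = U ** S" unfolding svd
    by (simp add: matrix_mul_assoc[symmetric] V_orth)
  have XtQ: "Xt ** Qp = 0" unfolding Qp_def mat_sub_ldistrib matrix_mul_assoc XtV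
    by (simp add: svd)
  have PX: "Pp ** X = Pp ** D" unfolding D_def by (simp add: mat_sub_ldistrib PXt)
  have XQ: "X ** Qp = D ** Qp" unfolding D_def by (simp add: mat_sub_rdistrib XtQ)
  have X0: "X \<noteq> 0"
  proof
    assume "X = 0"
    then have "rank X = 0" by (simp add: rank_dim_range)
    then show False using rank_X by simp
  qed
  have k: "(sigma_min X)^2 * inner E E \<le> inner (Pp ** X) (Pp ** X) * inner (X ** Qp) (X ** Qp)"
    unfolding E_def by (rule key[OF X0])
  have c1: "inner (Pp ** X) (Pp ** X) \<le> inner D D" unfolding PX unfolding Pp_def by (rule left_contract[OF U_orth])
  have c2: "inner (X ** Qp) (X ** Qp) \<le> inner D D" unfolding XQ unfolding Qp_def by (rule right_contract[OF V_orth])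
  have dlo: "nu * inner D D \<le> wi w D D" using wi_lower wlo by blast
  have Dnu: "inner D D \<le> wi w D D / nu" using dlo nu0 by (simp add: pos_le_divide_eq mult.commute)
  have "(sigma_min X)^2 * inner E E \<le> inner D D * inner D D"
    using k c1 c2 by (meson order_trans mult_mono inner_ge_zero)
  also have "\<dots> \<le> (wi w D D / nu) * (wi w D D / nu)" using Dnu by (intro mult_mono) (auto intro: order_trans[OF inner_ge_zero])
  finally have sE: "(sigma_min X)^2 * inner E E \<le> (wi w D D / nu)^2" by (simp add: power2_eq_square)
  have sp: "sigma_min X > 0" using sigma_props[OF X0] by blast
  have a0: "0 \<le> wi w D D" using dlo nu0 by (meson inner_ge_zero mult_nonneg_nonneg less_imp_le order_trans)
  have main: "sqrt (wi w (X - Yp) (X - Yp)) \<le> mu powr (5/4) / (nu powr (7/4) * sigma_min X) * wi w D D"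
    by (rule final_arith[OF nu0 numu sp a0 inner_ge_zero sE opt2])
  have fin: "wnorm L R (X - wproj L R T X) \<le> mu powr (5/4) / (nu powr (7/4) * sigma_min X) * (wnorm L R (X - Xt))^2"
    using main a0 unfolding wnorm_def win Yp_def D_def by simp
  from fin show ?thesis unfolding Let_def L_def R_def nu_def mu_def T_def .
qed

end
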